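(* Let $n\ge2$ and $t\ge1$ be integers, and let $m$ be a nonnegative integer. Then \[W_{t+1}(n)\le\sum_{k=0}^{\lfloor(n-1)/2\rfloor}\frac{2k+2}{n+1}\binom{2n-2k-1}{n}W_t(n-1,k)\] and \[W_{t+1}(n,m)\le\sum_{k=0}^{m}\frac{k+1}{n-k}\binom{n-k}{m+1}\binom{n-k}{m-k}W_t(n-1,k).\]
   Context: Permutations of $[n]$ are written in one-line notation; a descent of $\pi$ is an index $i\in[n-1]$ with $\pi_i>\pi_{i+1}$. The stack-sorting map $s$ is defined recursively by $s(\emptyset)=\emptyset$ and, if the largest entry of $\pi$ is $n$ and $\pi=LnR$, $s(\pi)=s(L)s(R)n$. A permutation $\pi$ of $[n]$ is $t$-stack sortable if $s^t(\pi)=12\cdots n$. $W_t(n)$ is the number of $t$-stack sortable permutations of $[n]$, and $W_t(n,k)$ the number of those with exactly $k$ descents. *)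

theory Defs
  imports Complex_Main
begin

function stack_sort :: "nat list \<Rightarrow> nat list" where
  "stack_sort xs =
     (if xs = [] then []
      else (let m = Max (set xs); i = (LEAST i. xs ! i = m)
            in stack_sort (take i xs) @ stack_sort (drop (Suc i) xs) @ [m]))"
  by pat_completeness auto
termination
proof (relation "measure length")
  fix xs :: "nat list" and m i
  assume "\<not> xs = []" and "m = Max (set xs)" and "i = (LEAST i. xs ! i = m)"
  moreover have "\<exists>j<length xs. xs ! j = Max (set xs)"
    using \<open>\<not> xs = []\<close> by (metis Max_in finite_set in_set_conv_nth set_empty)
  ultimately have "i < length xs"
    by (metis (mono_tags, lifting) LeastI_ex dual_order.strict_trans2 not_less_Least not_less)
  then show "(take i xs, xs) \<in> measure length" "(drop (Suc i) xs, xs) \<in> measure length"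
    by auto
qed auto

definition perms :: "nat \<Rightarrow> nat list set" where
  "perms n = {xs. distinct xs \<and> set xs = {1..n}}"

definition des :: "nat list \<Rightarrow> nat" where
  "des xs = card {i. 1 \<le> i \<and> i < length xs \<and> xs ! (i - 1) > xs ! i}"

definition t_stack_sortable :: "nat \<Rightarrow> nat list \<Rightarrow> bool" where
  "t_stack_sortable t xs \<longleftrightarrow> (stack_sort ^^ t) xs = [1..<length xs + 1]"

definition W :: "nat \<Rightarrow> nat \<Rightarrow> nat" where
  "W t n = card {xs \<in> perms n. t_stack_sortable t xs}"

definition Wk :: "nat \<Rightarrow> nat \<Rightarrow> nat \<Rightarrow> nat" where
  "Wk t n k = card {xs \<in> perms n. t_stack_sortable t xs \<and> des xs = k}"

end

theory Submission
  imports Defs "HOL-Library.Multiset"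
begin

declare stack_sort.simps[simp del]

lemma ss_nil[simp]: "stack_sort [] = []"
  by (subst stack_sort.simps) simp

lemma ss_decomp:
  assumes "xs \<noteq> []"
  shows "\<exists>A B. xs = A @ [Max (set xs)] @ B \<and>
     stack_sort xs = stack_sort A @ stack_sort B @ [Max (set xs)]"
proof -
  define m where "m = Max (set xs)"
  define i where "i = (LEAST i. xs ! i = m)"
  have "m \<in> set xs" using assms unfolding m_def by simp
  then obtain j where j: "j < length xs" "xs ! j = m" by (auto simp: in_set_conv_nth)
  have xi: "xs ! i = m" unfolding i_def using j(2) by (rule LeastI)
  have "i \<le> j" unfolding i_def using j by (simp add: Least_le)
  hence il: "i < length xs" using j by simp
  have 1: "xs = take i xs @ [m] @ drop (Suc i) xs"
    using id_take_nth_drop[OF il] xi by simp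
  have 2: "stack_sort xs = stack_sort (take i xs) @ stack_sort (drop (Suc i) xs) @ [m]"
    by (subst stack_sort.simps) (simp add: assms Let_def m_def i_def)
  show ?thesis using 1 2 unfolding m_def by blast
qed

lemma ss_mset: "mset (stack_sort xs) = mset xs"
proof (induction xs rule: length_induct)
  case (1 xs)
  show ?case
  proof (cases "xs = []")
    case True then show ?thesis by simp
  next
    case False
    then obtain A B where AB: "xs = A @ [Max (set xs)] @ B"
      "stack_sort xs = stack_sort A @ stack_sort B @ [Max (set xs)]"
      using ss_decomp by blast
    have "length A < length xs" "length B < length xs"
    proof -
      have "length xs = length (A @ [Max (set xs)] @ B)" using AB(1) by (rule arg_cong)
      thus "length A < length xs" "length B < length xs" by simp_all
    qed
    hence "mset (stack_sort A) = mset A" "mset (stack_sort B) = mset B" using 1 by auto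
    moreover have e: "mset xs = mset (A @ [Max (set xs)] @ B)" using AB(1) by (rule arg_cong)
    ultimately show ?thesis by (simp add: AB(2) e)
  qed
qed

lemma ss_set: "set (stack_sort xs) = set xs"
  by (metis ss_mset set_mset_mset)

lemma ss_length: "length (stack_sort xs) = length xs"
  by (metis ss_mset size_mset)

lemma ss_distinct: "distinct (stack_sort xs) = distinct xs"
  using ss_mset by (rule mset_eq_imp_distinct_iff)

lemma ss_last: "xs \<noteq> [] \<Longrightarrow> stack_sort xs \<noteq> [] \<and> last (stack_sort xs) = Max (set xs)"
  using ss_decomp by fastforce

lemma ss_snoc_max:
  assumes "\<forall>y\<in>set xs. y < n"
  shows "stack_sort (xs @ [n]) = stack_sort xs @ [n]"
proof -
  have M: "Max (set (xs @ [n])) = n" using assms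
    by (simp add: Max_insert2 less_imp_le)
  have L: "(LEAST i. (xs @ [n]) ! i = n) = length xs"
  proof (rule Least_equality)
    show "(xs @ [n]) ! length xs = n" by simp
  next
    fix y assume "(xs @ [n]) ! y = n"
    then show "length xs \<le> y" using assms
      by (metis leI less_irrefl nth_append nth_mem)
  qed
  show ?thesis
    apply (subst stack_sort.simps)
    apply (simp only: Let_def M L)
    apply simp
    done
qed

definition dset :: "nat list \<Rightarrow> nat set" where
  "dset l = {i. 1 \<le> i \<and> i < length l \<and> l ! (i - 1) > l ! i}"

lemma des_dset: "des l = card (dset l)" unfolding des_def dset_def ..

lemma dset_Cons: "dset (x # l) = (if l \<noteq> [] \<and> x > hd l then {1} else {}) \<union> Suc ` dset l"
proof (intro set_eqI iffI)
  fix i assume "i \<in> dset (x # l)"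
  then have i: "1 \<le> i" "i < Suc (length l)" "(x#l) ! (i - 1) > (x#l) ! i" unfolding dset_def by auto
  show "i \<in> (if l \<noteq> [] \<and> x > hd l then {1} else {}) \<union> Suc ` dset l"
  proof (cases "i = 1")
    case True
    then show ?thesis using i by (cases l) auto
  next
    case False
    then obtain i' where i': "i = Suc (Suc i')" using i(1) by (metis One_nat_def Suc_le_D not0_implies_Suc)
    then have "Suc i' \<in> dset l" using i unfolding dset_def by auto
    then show ?thesis using i' by auto
  qed
next
  fix i assume "i \<in> (if l \<noteq> [] \<and> x > hd l then {1} else {}) \<union> Suc ` dset l"
  then show "i \<in> dset (x # l)"
  proof
    assume "i \<in> (if l \<noteq> [] \<and> x > hd l then {1} else {})"
    then show ?thesis unfolding dset_def by (cases l) (auto split: if_splits)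
  next
    assume "i \<in> Suc ` dset l"
    then obtain i' where "i = Suc i'" "i' \<in> dset l" by auto
    then show ?thesis unfolding dset_def by (cases i') auto
  qed
qed

lemma finite_dset: "finite (dset l)" unfolding dset_def by (rule finite_subset[of _ "{..<length l}"]) auto

lemma des_Cons: "des (x # l) = (if l \<noteq> [] \<and> x > hd l then 1 else 0) + des l"
proof -
  have d: "(if l \<noteq> [] \<and> x > hd l then {1} else {}) \<inter> Suc ` dset l = {}"
    unfolding dset_def by auto
  have "card (Suc ` dset l) = card (dset l)" by (rule card_image) simp
  then show ?thesis unfolding des_dset dset_Cons
    using card_Un_disjoint[OF _ _ d] finite_dset by auto
qed

lemma des_Nil[simp]: "des [] = 0" unfolding des_def by simp

lemma des_append: "des (A @ B) = des A + des B + (if A \<noteq> [] \<and> B \<noteq> [] \<and> last A > hd B then 1 else 0)"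
proof (induction A)
  case Nil then show ?case by simp
next
  case (Cons a A)
  show ?case
  proof (cases "A = []")
    case True then show ?thesis by (simp add: des_Cons)
  next
    case False then show ?thesis using Cons by (simp add: des_Cons)
  qed
qed

lemma des_snoc: "des (u @ [x]) = des u + (if u \<noteq> [] \<and> last u > x then 1 else 0)"
  by (simp add: des_append des_Cons)

lemma des_less: "l \<noteq> [] \<Longrightarrow> des l < length l"
proof (induction l)
  case Nil then show ?case by simp
next
  case (Cons a l) then show ?case by (cases "l = []") (auto simp: des_Cons)
qed

definition FT :: "nat \<Rightarrow> nat list \<Rightarrow> nat list list set" where
  "FT h w = {ps. length ps = h \<and> (\<forall>p\<in>set ps. p \<noteq> []) \<and> distinct (concat ps)
              \<and> concat (map stack_sort ps) = w}"

definition sdes :: "nat list list \<Rightarrow> nat" where "sdes ps = sum_list (map des ps)"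

definition FS :: "nat \<Rightarrow> nat list \<Rightarrow> nat \<Rightarrow> nat list list set" where
  "FS h w j = {ps \<in> FT h w. sdes ps = j}"

definition g1 :: "nat \<Rightarrow> nat list list \<Rightarrow> nat list list" where "g1 x qs = qs @ [[x]]"
definition g2 :: "nat \<Rightarrow> nat list list \<Rightarrow> nat list list" where "g2 x qs = butlast qs @ [last qs @ [x]]"
definition g3 :: "nat \<Rightarrow> nat list list \<Rightarrow> nat list list" where "g3 x qs = butlast qs @ [x # last qs]"
definition g4 :: "nat \<Rightarrow> nat list list \<Rightarrow> nat list list" where
  "g4 x qs = butlast (butlast qs) @ [last (butlast qs) @ x # last qs]"

lemma sdes_append[simp]: "sdes (xs @ ys) = sdes xs + sdes ys" unfolding sdes_def by simp
lemma sdes_Cons[simp]: "sdes (x # ys) = des x + sdes ys" unfolding sdes_def by simp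
lemma sdes_Nil[simp]: "sdes [] = 0" unfolding sdes_def by simp

lemma FT_Nil: "FT h [] \<subseteq> (if h = 0 then {[]} else {})"
proof
  fix ps assume "ps \<in> FT h []"
  then have ps: "length ps = h" "\<forall>p\<in>set ps. p \<noteq> []" "concat (map stack_sort ps) = []"
    unfolding FT_def by auto
  have "ps = []"
  proof (rule ccontr)
    assume "ps \<noteq> []"
    then obtain p where "p \<in> set ps" by (cases ps) auto
    then have "stack_sort p \<noteq> []" using ps(2) ss_last by blast
    then show False using ps(3) \<open>p \<in> set ps\<close> by auto
  qed
  then show "ps \<in> (if h = 0 then {[]} else {})" using ps by auto
qed

lemma FT_cases:
  assumes "ps \<in> FT h (u @ [x])"
  shows "h \<ge> 1 \<and> ((\<exists>qs\<in>FT (h - 1) u. ps = g1 x qs \<and> sdes ps = sdes qs) \<or>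
     (\<not> (u \<noteq> [] \<and> last u > x) \<and>
       ((\<exists>qs\<in>FT h u. ps = g2 x qs \<and> sdes ps = sdes qs) \<or>
        (\<exists>qs\<in>FT h u. ps = g3 x qs \<and> sdes ps = Suc (sdes qs)) \<or>
        (\<exists>qs\<in>FT (h + 1) u. ps = g4 x qs \<and> sdes ps = Suc (sdes qs)))))"
proof -
  have ps: "length ps = h" "\<forall>p\<in>set ps. p \<noteq> []" "distinct (concat ps)"
    "concat (map stack_sort ps) = u @ [x]"
    using assms unfolding FT_def by auto
  have "ps \<noteq> []" using ps(4) by auto
  define P0 where "P0 = butlast ps"
  define p where "p = last ps"
  have psd: "ps = P0 @ [p]" unfolding P0_def p_def using \<open>ps \<noteq> []\<close> by simp
  have hP0: "h = Suc (length P0)" using ps(1) psd by simp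
  have pne: "p \<noteq> []" using ps(2) psd by auto
  have P0ne: "\<forall>q\<in>set P0. q \<noteq> []" using ps(2) psd by auto
  obtain A B where AB: "p = A @ [Max (set p)] @ B"
      "stack_sort p = stack_sort A @ stack_sort B @ [Max (set p)]"
    using ss_decomp[OF pne] by blast
  define M where "M = Max (set p)"
  have AB1: "p = A @ [M] @ B" "stack_sort p = stack_sort A @ stack_sort B @ [M]"
    using AB unfolding M_def by auto
  have "concat (map stack_sort P0) @ stack_sort A @ stack_sort B @ [M] = u @ [x]"
    using ps(4) unfolding psd by (simp add: AB1(2))
  hence Mx: "M = x" and uu: "u = concat (map stack_sort P0) @ stack_sort A @ stack_sort B"
    by auto
  have dist: "distinct (concat P0 @ A @ [x] @ B)" using ps(3) unfolding psd AB1(1) Mx by simp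
  have ltA: "\<forall>y\<in>set A. y < x" and ltB: "\<forall>y\<in>set B. y < x"
  proof -
    have "\<forall>y\<in>set p. y \<le> M" unfolding M_def by simp
    hence le: "\<forall>y\<in>set A. y \<le> x" "\<forall>y\<in>set B. y \<le> x" using AB1(1) Mx by auto
    have "x \<notin> set A" "x \<notin> set B" using dist by auto
    then show "\<forall>y\<in>set A. y < x" "\<forall>y\<in>set B. y < x" using le by (auto simp: le_less)
  qed
  have dP0: "distinct (concat P0)" using dist by simp
  have h1: "h \<ge> 1" using hP0 by simp
  show ?thesis
  proof (cases "A = []")
    case A: True
    show ?thesis
    proof (cases "B = []")
      case B: True
      have "P0 \<in> FT (h - 1) u" unfolding FT_def using hP0 P0ne dP0 uu A B by simp
      moreover have "ps = g1 x P0" unfolding g1_def psd AB1(1) A B Mx by simp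
      moreover have "sdes ps = sdes P0" unfolding psd AB1(1) A B Mx by (simp add: des_Cons)
      ultimately show ?thesis using h1 by blast
    next
      case B: False
      define qs where "qs = P0 @ [B]"
      have "qs \<in> FT h u" unfolding FT_def qs_def using hP0 P0ne B dist uu A by auto
      moreover have "ps = g3 x qs" unfolding g3_def qs_def psd AB1(1) A Mx by simp
      moreover have "sdes ps = Suc (sdes qs)"
      proof -
        have "hd B \<in> set B" using B by simp
        hence "x > hd B" using ltB by blast
        thus ?thesis unfolding qs_def psd AB1(1) A Mx using B by (simp add: des_Cons)
      qed
      moreover have "\<not> (u \<noteq> [] \<and> last u > x)"
      proof -
        have "last u = last (stack_sort B)" unfolding uu A using ss_last[OF B] by simp
        also have "\<dots> = Max (set B)" using ss_last[OF B] by simp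
        also have "\<dots> \<in> set B" using B by simp
        finally show ?thesis using ltB by auto
      qed
      ultimately show ?thesis using h1 by blast
    qed
  next
    case A: False
    have lA: "last A \<in> set A" using A by simp
    have nlA: "\<not> x < last A" using lA ltA by auto
    show ?thesis
    proof (cases "B = []")
      case B: True
      define qs where "qs = P0 @ [A]"
      have "qs \<in> FT h u" unfolding FT_def qs_def using hP0 P0ne A dist uu B by auto
      moreover have "ps = g2 x qs" unfolding g2_def qs_def psd AB1(1) B Mx by simp
      moreover have "sdes ps = sdes qs"
        unfolding qs_def psd AB1(1) B Mx using A nlA by (auto simp: des_snoc)
      moreover have "\<not> (u \<noteq> [] \<and> last u > x)"
      proof -
        have "last u = last (stack_sort A)" unfolding uu B using ss_last[OF A] by simp
        also have "\<dots> = Max (set A)" using ss_last[OF A] by simp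
        also have "\<dots> \<in> set A" using A by simp
        finally show ?thesis using ltA by auto
      qed
      ultimately show ?thesis using h1 by blast
    next
      case B: False
      define qs where "qs = P0 @ [A, B]"
      have "qs \<in> FT (h + 1) u" unfolding FT_def qs_def using hP0 P0ne A B dist uu by auto
      moreover have "ps = g4 x qs"
      proof -
        have "butlast (P0 @ [A, B]) = P0 @ [A]" by (simp add: butlast_append)
        thus ?thesis unfolding g4_def qs_def psd AB1(1) Mx by simp
      qed
      moreover have "sdes ps = Suc (sdes qs)"
      proof -
        have "hd B \<in> set B" using B by simp
        hence "x > hd B" using ltB by blast
        hence "des (A @ [x] @ B) = des A + Suc (des B)"
          using A B nlA by (auto simp: des_append des_Cons)
        thus ?thesis unfolding qs_def psd AB1(1) Mx by simp
      qed
      moreover have "\<not> (u \<noteq> [] \<and> last u > x)"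
      proof -
        have "last u = last (stack_sort B)" unfolding uu using ss_last[OF B] by simp
        also have "\<dots> = Max (set B)" using ss_last[OF B] by simp
        also have "\<dots> \<in> set B" using B by simp
        finally show ?thesis using ltB by auto
      qed
      ultimately show ?thesis using h1 by blast
    qed
  qed
qed

lemma FT_zero: "w \<noteq> [] \<Longrightarrow> FT 0 w = {}" unfolding FT_def by auto

lemma FT_incl: "FT h (u @ [x]) \<subseteq> g1 x ` FT (h - 1) u \<union>
   (if u \<noteq> [] \<and> last u > x then {} else g2 x ` FT h u \<union> g3 x ` FT h u \<union> g4 x ` FT (h + 1) u)"
proof
  fix ps assume "ps \<in> FT h (u @ [x])"
  from FT_cases[OF this] show "ps \<in> g1 x ` FT (h - 1) u \<union>
   (if u \<noteq> [] \<and> last u > x then {} else g2 x ` FT h u \<union> g3 x ` FT h u \<union> g4 x ` FT (h + 1) u)"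
    by auto
qed

lemma FS_incl: "FS h (u @ [x]) j \<subseteq> g1 x ` FS (h - 1) u j \<union>
   (if u \<noteq> [] \<and> last u > x then {} else g2 x ` FS h u j \<union>
     (case j of 0 \<Rightarrow> {} | Suc j' \<Rightarrow> g3 x ` FS h u j' \<union> g4 x ` FS (h + 1) u j'))"
proof
  fix ps assume a: "ps \<in> FS h (u @ [x]) j"
  then have ps: "ps \<in> FT h (u @ [x])" "sdes ps = j" unfolding FS_def by auto
  from FT_cases[OF ps(1)] ps(2) show "ps \<in> g1 x ` FS (h - 1) u j \<union>
   (if u \<noteq> [] \<and> last u > x then {} else g2 x ` FS h u j \<union>
     (case j of 0 \<Rightarrow> {} | Suc j' \<Rightarrow> g3 x ` FS h u j' \<union> g4 x ` FS (h + 1) u j'))"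
    unfolding FS_def by (auto split: nat.splits)
qed

lemma finite_FT: "finite (FT h w)"
proof (induction w arbitrary: h rule: rev_induct)
  case Nil
  show ?case by (rule finite_subset[OF FT_Nil]) auto
next
  case (snoc x u)
  show ?case by (rule finite_subset[OF FT_incl]) (auto simp: snoc)
qed

lemma finite_FS: "finite (FS h w j)"
  by (rule finite_subset[OF _ finite_FT[of h w]]) (auto simp: FS_def)

lemma card_FT_step: "card (FT h (u @ [x])) \<le> card (FT (h - 1) u) +
   (if u \<noteq> [] \<and> last u > x then 0 else card (FT h u) + card (FT h u) + card (FT (h + 1) u))"
proof -
  have "card (FT h (u @ [x])) \<le> card (g1 x ` FT (h - 1) u \<union>
   (if u \<noteq> [] \<and> last u > x then {} else g2 x ` FT h u \<union> g3 x ` FT h u \<union> g4 x ` FT (h + 1) u))"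
    by (rule card_mono[OF _ FT_incl]) (auto simp: finite_FT)
  also have "\<dots> \<le> card (g1 x ` FT (h - 1) u) + card
   (if u \<noteq> [] \<and> last u > x then {} else g2 x ` FT h u \<union> g3 x ` FT h u \<union> g4 x ` FT (h + 1) u)"
    by (rule card_Un_le)
  also have "\<dots> \<le> card (FT (h - 1) u) +
   (if u \<noteq> [] \<and> last u > x then 0 else card (FT h u) + card (FT h u) + card (FT (h + 1) u))"
  proof (rule add_mono)
    show "card (g1 x ` FT (h - 1) u) \<le> card (FT (h - 1) u)" by (rule card_image_le[OF finite_FT])
  next
    have "card (g2 x ` FT h u \<union> g3 x ` FT h u \<union> g4 x ` FT (h + 1) u)
       \<le> card (g2 x ` FT h u) + card (g3 x ` FT h u) + card (g4 x ` FT (h + 1) u)"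
    proof -
      have "card (g2 x ` FT h u \<union> g3 x ` FT h u \<union> g4 x ` FT (h + 1) u)
         \<le> card (g2 x ` FT h u \<union> g3 x ` FT h u) + card (g4 x ` FT (h + 1) u)" by (rule card_Un_le)
      moreover have "card (g2 x ` FT h u \<union> g3 x ` FT h u) \<le> card (g2 x ` FT h u) + card (g3 x ` FT h u)"
        by (rule card_Un_le)
      ultimately show ?thesis by linarith
    qed
    also have "\<dots> \<le> card (FT h u) + card (FT h u) + card (FT (h + 1) u)"
      by (intro add_mono card_image_le finite_FT)
    finally have calc: "card (g2 x ` FT h u \<union> g3 x ` FT h u \<union> g4 x ` FT (h + 1) u) \<le> card (FT h u) + card (FT h u) + card (FT (h + 1) u)" .
    show "card (if u \<noteq> [] \<and> last u > x then {} else g2 x ` FT h u \<union> g3 x ` FT h u \<union> g4 x ` FT (h + 1) u)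
      \<le> (if u \<noteq> [] \<and> last u > x then 0 else card (FT h u) + card (FT h u) + card (FT (h + 1) u))"
    proof (cases "u \<noteq> [] \<and> last u > x")
      case True then show ?thesis by simp
    next
      case False then show ?thesis using calc by (simp only: if_not_P if_False)
    qed
  qed
  finally show ?thesis .
qed

lemma card_FS_step: "card (FS h (u @ [x]) j) \<le> card (FS (h - 1) u j) +
   (if u \<noteq> [] \<and> last u > x then 0 else card (FS h u j) +
     (case j of 0 \<Rightarrow> 0 | Suc j' \<Rightarrow> card (FS h u j') + card (FS (h + 1) u j')))"
proof -
  have "card (FS h (u @ [x]) j) \<le> card (g1 x ` FS (h - 1) u j \<union>
   (if u \<noteq> [] \<and> last u > x then {} else g2 x ` FS h u j \<union>
     (case j of 0 \<Rightarrow> {} | Suc j' \<Rightarrow> g3 x ` FS h u j' \<union> g4 x ` FS (h + 1) u j')))"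
    by (rule card_mono[OF _ FS_incl]) (auto simp: finite_FS split: nat.splits)
  also have "\<dots> \<le> card (g1 x ` FS (h - 1) u j) + card
   (if u \<noteq> [] \<and> last u > x then {} else g2 x ` FS h u j \<union>
     (case j of 0 \<Rightarrow> {} | Suc j' \<Rightarrow> g3 x ` FS h u j' \<union> g4 x ` FS (h + 1) u j'))"
    by (rule card_Un_le)
  also have "\<dots> \<le> card (FS (h - 1) u j) +
   (if u \<noteq> [] \<and> last u > x then 0 else card (FS h u j) +
     (case j of 0 \<Rightarrow> 0 | Suc j' \<Rightarrow> card (FS h u j') + card (FS (h + 1) u j')))"
  proof (rule add_mono)
    show "card (g1 x ` FS (h - 1) u j) \<le> card (FS (h - 1) u j)" by (rule card_image_le[OF finite_FS])
  next
    have c3: "card (case j of 0 \<Rightarrow> {} | Suc j' \<Rightarrow> g3 x ` FS h u j' \<union> g4 x ` FS (h + 1) u j')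
       \<le> (case j of 0 \<Rightarrow> 0 | Suc j' \<Rightarrow> card (FS h u j') + card (FS (h + 1) u j'))"
    proof (cases j)
      case 0 then show ?thesis by simp
    next
      case (Suc j')
      have "card (g3 x ` FS h u j' \<union> g4 x ` FS (h + 1) u j') \<le> card (g3 x ` FS h u j') + card (g4 x ` FS (h + 1) u j')"
        by (rule card_Un_le)
      also have "\<dots> \<le> card (FS h u j') + card (FS (h + 1) u j')"
        by (intro add_mono card_image_le finite_FS)
      finally show ?thesis using Suc by simp
    qed
    have "card (g2 x ` FS h u j \<union> (case j of 0 \<Rightarrow> {} | Suc j' \<Rightarrow> g3 x ` FS h u j' \<union> g4 x ` FS (h + 1) u j'))
      \<le> card (g2 x ` FS h u j) + card (case j of 0 \<Rightarrow> {} | Suc j' \<Rightarrow> g3 x ` FS h u j' \<union> g4 x ` FS (h + 1) u j')"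
      by (rule card_Un_le)
    also have "\<dots> \<le> card (FS h u j) + (case j of 0 \<Rightarrow> 0 | Suc j' \<Rightarrow> card (FS h u j') + card (FS (h + 1) u j'))"
      by (intro add_mono card_image_le finite_FS c3)
    finally have calc: "card (g2 x ` FS h u j \<union> (case j of 0 \<Rightarrow> {} | Suc j' \<Rightarrow> g3 x ` FS h u j' \<union> g4 x ` FS (h + 1) u j'))
      \<le> card (FS h u j) + (case j of 0 \<Rightarrow> 0 | Suc j' \<Rightarrow> card (FS h u j') + card (FS (h + 1) u j'))" .
    show "card (if u \<noteq> [] \<and> last u > x then {} else g2 x ` FS h u j \<union>
     (case j of 0 \<Rightarrow> {} | Suc j' \<Rightarrow> g3 x ` FS h u j' \<union> g4 x ` FS (h + 1) u j'))
      \<le> (if u \<noteq> [] \<and> last u > x then 0 else card (FS h u j) +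
     (case j of 0 \<Rightarrow> 0 | Suc j' \<Rightarrow> card (FS h u j') + card (FS (h + 1) u j')))"
    proof (cases "u \<noteq> [] \<and> last u > x")
      case True then show ?thesis by simp
    next
      case False then show ?thesis using calc by (simp only: if_not_P if_False)
    qed
  qed
  finally show ?thesis .
qed

fun Pl :: "nat \<Rightarrow> nat \<Rightarrow> nat \<Rightarrow> nat \<Rightarrow> nat" where
  "Pl a b 0 j = (if a = b \<and> b \<ge> 1 \<and> j = 0 then 1 else 0)"
| "Pl a b (Suc s) j = (if b = 0 then 0 else Pl a (b - 1) s j + Pl a b s j +
      (case j of 0 \<Rightarrow> 0 | Suc j' \<Rightarrow> Pl a b s j' + Pl a (b + 1) s j'))"

fun Tl :: "nat \<Rightarrow> nat \<Rightarrow> nat \<Rightarrow> nat" where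
  "Tl a b 0 = (if a = b \<and> b \<ge> 1 then 1 else 0)"
| "Tl a b (Suc s) = (if b = 0 then 0 else Tl a (b - 1) s + 2 * Tl a b s + Tl a (b + 1) s)"

lemma Pl_shift: "Pl a b s j \<le> Pl (Suc a) (Suc b) s j"
proof (induction s arbitrary: b j)
  case 0 then show ?case by simp
next
  case (Suc s)
  show ?case
  proof (cases "b = 0")
    case True then show ?thesis by simp
  next
    case False
    have e: "Suc (b - 1) = b" using False by simp
    have 1: "Pl a (b - 1) s j \<le> Pl (Suc a) (Suc b - 1) s j" using Suc.IH[of "b - 1" j] e by simp
    have 2: "(case j of 0 \<Rightarrow> 0 | Suc j' \<Rightarrow> Pl a b s j' + Pl a (b + 1) s j') \<le>
             (case j of 0 \<Rightarrow> 0 | Suc j' \<Rightarrow> Pl (Suc a) (Suc b) s j' + Pl (Suc a) (Suc b + 1) s j')"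
      by (cases j) (auto intro: add_mono Suc.IH simp del: Pl.simps)
    show ?thesis using False 1 2 Suc.IH[of b j] by (simp del: Pl.simps(1))
  qed
qed

lemma Tl_shift: "Tl a b s \<le> Tl (Suc a) (Suc b) s"
proof (induction s arbitrary: b)
  case 0 then show ?case by simp
next
  case (Suc s)
  show ?case
  proof (cases "b = 0")
    case True then show ?thesis by simp
  next
    case False
    have e: "Suc (b - 1) = b" using False by simp
    have 1: "Tl a (b - 1) s \<le> Tl (Suc a) (Suc b - 1) s" using Suc.IH[of "b - 1"] e by simp
    show ?thesis using False 1 Suc.IH[of b] Suc.IH[of "b+1"] by simp
  qed
qed

lemma FS_single: "card (FS h [x] j) \<le> Pl 1 h 0 j"
proof -
  have "FS h ([] @ [x]) j \<subseteq> (if h = 1 \<and> j = 0 then {[[x]]} else {})"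
  proof
    fix ps assume "ps \<in> FS h ([] @ [x]) j"
    then have ps: "ps \<in> FT h ([] @ [x])" "sdes ps = j" unfolding FS_def by auto
    have n: "\<And>h' qs. qs \<in> FT h' [] \<Longrightarrow> h' = 0 \<and> qs = []"
    proof -
      fix h' qs assume "qs \<in> FT h' []"
      then have "qs \<in> (if h' = 0 then {[]} else {})" using FT_Nil by blast
      then show "h' = 0 \<and> qs = []" by (simp split: if_splits)
    qed
    have c: "h \<ge> 1" "(\<exists>qs\<in>FT (h - 1) []. ps = g1 x qs \<and> sdes ps = sdes qs) \<or>
     (\<not> ([] \<noteq> [] \<and> last [] > x) \<and>
       ((\<exists>qs\<in>FT h []. ps = g2 x qs \<and> sdes ps = sdes qs) \<or>
        (\<exists>qs\<in>FT h []. ps = g3 x qs \<and> sdes ps = Suc (sdes qs)) \<or>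
        (\<exists>qs\<in>FT (h + 1) []. ps = g4 x qs \<and> sdes ps = Suc (sdes qs))))"
      using FT_cases[OF ps(1)] by auto
    have n1: "\<forall>qs. qs \<notin> FT h []" using n c(1) by fastforce
    have n2: "\<forall>qs. qs \<notin> FT (h + 1) []" using n by fastforce
    obtain qs where q: "qs \<in> FT (h - 1) []" "ps = g1 x qs" "sdes ps = sdes qs"
      using c(2) n1 n2 by blast
    have "h - 1 = 0" "qs = []" using n[OF q(1)] by auto
    then show "ps \<in> (if h = 1 \<and> j = 0 then {[[x]]} else {})"
      using q ps(2) c(1) by (simp add: g1_def)
  qed
  then have "card (FS h [x] j) \<le> card (if h = 1 \<and> j = 0 then {[[x]]} else {})"
    by (intro card_mono) auto
  then show ?thesis by (auto split: if_splits)
qed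

lemma FT_single: "card (FT h [x]) \<le> Tl 1 h 0"
proof -
  have "FT h ([] @ [x]) \<subseteq> (if h = 1 then {[[x]]} else {})"
  proof
    fix ps assume ps: "ps \<in> FT h ([] @ [x])"
    have n: "\<And>h' qs. qs \<in> FT h' [] \<Longrightarrow> h' = 0 \<and> qs = []"
    proof -
      fix h' qs assume "qs \<in> FT h' []"
      then have "qs \<in> (if h' = 0 then {[]} else {})" using FT_Nil by blast
      then show "h' = 0 \<and> qs = []" by (simp split: if_splits)
    qed
    have c: "h \<ge> 1" "(\<exists>qs\<in>FT (h - 1) []. ps = g1 x qs \<and> sdes ps = sdes qs) \<or>
     (\<not> ([] \<noteq> [] \<and> last [] > x) \<and>
       ((\<exists>qs\<in>FT h []. ps = g2 x qs \<and> sdes ps = sdes qs) \<or>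
        (\<exists>qs\<in>FT h []. ps = g3 x qs \<and> sdes ps = Suc (sdes qs)) \<or>
        (\<exists>qs\<in>FT (h + 1) []. ps = g4 x qs \<and> sdes ps = Suc (sdes qs))))"
      using FT_cases[OF ps] by auto
    have n1: "\<forall>qs. qs \<notin> FT h []" using n c(1) by fastforce
    have n2: "\<forall>qs. qs \<notin> FT (h + 1) []" using n by fastforce
    obtain qs where q: "qs \<in> FT (h - 1) []" "ps = g1 x qs"
      using c(2) n1 n2 by blast
    have "h - 1 = 0" "qs = []" using n[OF q(1)] by auto
    then show "ps \<in> (if h = 1 then {[[x]]} else {})"
      using q c(1) by (simp add: g1_def)
  qed
  then have "card (FT h [x]) \<le> card (if h = 1 then {[[x]]} else {})"
    by (intro card_mono) auto
  then show ?thesis by (auto split: if_splits)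
qed

lemma FS_bound: "w \<noteq> [] \<Longrightarrow> card (FS h w j) \<le> Pl (des w + 1) h (length w - des w - 1) j"
proof (induction w arbitrary: h j rule: rev_induct)
  case Nil then show ?case by simp
next
  case (snoc x u)
  show ?case
  proof (cases "u = []")
    case True then show ?thesis using FS_single by (simp add: des_Cons)
  next
    case False
    note IH = snoc.IH[OF False]
    define k where "k = des u"
    define s where "s = length u - k - 1"
    have kl: "k < length u" unfolding k_def using des_less[OF False] .
    show ?thesis
    proof (cases "h = 0")
      case True
      then show ?thesis using FT_zero[of "u @ [x]"] unfolding FS_def by simp
    next
      case h: False
      show ?thesis
      proof (cases "last u > x")
        case True
        have dw: "des (u @ [x]) = k + 1" using True False unfolding k_def by (simp add: des_snoc)
        have "card (FS h (u @ [x]) j) \<le> card (FS (h - 1) u j)"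
          using card_FS_step[of h u x j] True False by simp
        also have "\<dots> \<le> Pl (k + 1) (h - 1) s j" using IH[of "h - 1" j] unfolding k_def s_def by simp
        also have "\<dots> \<le> Pl (Suc (k + 1)) (Suc (h - 1)) s j" by (rule Pl_shift)
        also have "\<dots> = Pl (des (u @ [x]) + 1) h (length (u @ [x]) - des (u @ [x]) - 1) j"
          using h kl dw unfolding s_def by simp
        finally show ?thesis .
      next
        case nf: False
        have dw: "des (u @ [x]) = k" using nf unfolding k_def by (simp add: des_snoc)
        have e: "length (u @ [x]) - des (u @ [x]) - 1 = Suc s" using kl dw unfolding s_def by simp
        have "card (FS h (u @ [x]) j) \<le> card (FS (h - 1) u j) + (card (FS h u j) +
            (case j of 0 \<Rightarrow> 0 | Suc j' \<Rightarrow> card (FS h u j') + card (FS (h + 1) u j')))"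
          using card_FS_step[of h u x j] nf by simp
        also have "\<dots> \<le> Pl (k + 1) (h - 1) s j + (Pl (k + 1) h s j +
            (case j of 0 \<Rightarrow> 0 | Suc j' \<Rightarrow> Pl (k + 1) h s j' + Pl (k + 1) (h + 1) s j'))"
          using IH unfolding k_def s_def by (intro add_mono) (auto split: nat.splits intro: add_mono)
        also have "\<dots> = Pl (k + 1) h (Suc s) j"
          using h by (cases j) simp_all
        finally have "card (FS h (u @ [x]) j) \<le> Pl (k + 1) h (Suc s) j" .
        moreover have "Suc s = length u - k" using kl unfolding s_def by simp
        ultimately show ?thesis using dw by simp
      qed
    qed
  qed
qed

lemma FT_bound: "w \<noteq> [] \<Longrightarrow> card (FT h w) \<le> Tl (des w + 1) h (length w - des w - 1)"
proof (induction w arbitrary: h rule: rev_induct)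
  case Nil then show ?case by simp
next
  case (snoc x u)
  show ?case
  proof (cases "u = []")
    case True then show ?thesis using FT_single by (simp add: des_Cons)
  next
    case False
    note IH = snoc.IH[OF False]
    define k where "k = des u"
    define s where "s = length u - k - 1"
    have kl: "k < length u" unfolding k_def using des_less[OF False] .
    show ?thesis
    proof (cases "h = 0")
      case True
      then show ?thesis using FT_zero[of "u @ [x]"] by simp
    next
      case h: False
      show ?thesis
      proof (cases "last u > x")
        case True
        have dw: "des (u @ [x]) = k + 1" using True False unfolding k_def by (simp add: des_snoc)
        have "card (FT h (u @ [x])) \<le> card (FT (h - 1) u)"
          using card_FT_step[of h u x] True False by simp
        also have "\<dots> \<le> Tl (k + 1) (h - 1) s" using IH[of "h - 1"] unfolding k_def s_def by simp
        also have "\<dots> \<le> Tl (Suc (k + 1)) (Suc (h - 1)) s" by (rule Tl_shift)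
        also have "\<dots> = Tl (des (u @ [x]) + 1) h (length (u @ [x]) - des (u @ [x]) - 1)"
          using h kl dw unfolding s_def by simp
        finally show ?thesis .
      next
        case nf: False
        have dw: "des (u @ [x]) = k" using nf unfolding k_def by (simp add: des_snoc)
        have e: "length (u @ [x]) - des (u @ [x]) - 1 = Suc s" using kl dw unfolding s_def by simp
        have "card (FT h (u @ [x])) \<le> card (FT (h - 1) u) + (card (FT h u) + card (FT h u) + card (FT (h + 1) u))"
          using card_FT_step[of h u x] nf by simp
        also have "\<dots> \<le> Tl (k + 1) (h - 1) s + (Tl (k + 1) h s + Tl (k + 1) h s + Tl (k + 1) (h + 1) s)"
          using IH unfolding k_def s_def by (intro add_mono) auto
        also have "\<dots> = Tl (k + 1) h (Suc s)"
          using h by simp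
        finally have "card (FT h (u @ [x])) \<le> Tl (k + 1) h (Suc s)" .
        moreover have "Suc s = length u - k" using kl unfolding s_def by simp
        ultimately show ?thesis using dw by simp
      qed
    qed
  qed
qed

lemma Pl_zero_start: "Pl 0 b s j = 0"
  by (induction s arbitrary: b j) (auto split: nat.splits)

lemma Tl_zero_start: "Tl 0 b s = 0"
  by (induction s arbitrary: b) auto

lemma Pl_first: "Pl a b (Suc s) j = (if a = 0 then 0 else Pl (Suc a) b s j + Pl a b s j +
     (case j of 0 \<Rightarrow> 0 | Suc j' \<Rightarrow> Pl a b s j' + Pl (a - 1) b s j'))"
proof (induction s arbitrary: b j)
  case 0 show ?case by (auto split: nat.split)
next
  case (Suc s)
  show ?case
  proof (cases "a = 0")
    case True then show ?thesis by (simp del: Pl.simps add: Pl_zero_start)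
  next
    case a: False
    show ?thesis
    proof (cases "b = 0")
      case True then show ?thesis by (simp split: nat.split)
    next
      case b: False
      have D: "\<And>x z. Pl x b (Suc s) z = Pl x (b - 1) s z + Pl x b s z +
          (case z of 0 \<Rightarrow> 0 | Suc z' \<Rightarrow> Pl x b s z' + Pl x (b + 1) s z')" using b by simp
      have I: "\<And>y z. Pl a y (Suc s) z = Pl (Suc a) y s z + Pl a y s z +
          (case z of 0 \<Rightarrow> 0 | Suc z' \<Rightarrow> Pl a y s z' + Pl (a - 1) y s z')"
        using a Suc.IH by simp
      define DF where "DF x z = Pl x (b - 1) s z + Pl x b s z +
          (case z of 0 \<Rightarrow> 0 | Suc z' \<Rightarrow> Pl x b s z' + Pl x (b + 1) s z')" for x z
      define IF where "IF y z = Pl (Suc a) y s z + Pl a y s z +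
          (case z of 0 \<Rightarrow> 0 | Suc z' \<Rightarrow> Pl a y s z' + Pl (a - 1) y s z')" for y z
      have top: "Pl a b (Suc (Suc s)) j = Pl a (b - 1) (Suc s) j + Pl a b (Suc s) j +
          (case j of 0 \<Rightarrow> 0 | Suc j' \<Rightarrow> Pl a b (Suc s) j' + Pl a (b + 1) (Suc s) j')"
        by (subst Pl.simps(2)) (simp only: b if_False)
      have L: "Pl a b (Suc (Suc s)) j = IF (b - 1) j + IF b j +
          (case j of 0 \<Rightarrow> 0 | Suc j' \<Rightarrow> IF b j' + IF (b + 1) j')"
        unfolding top I IF_def ..
      have R: "(if a = 0 then 0 else Pl (Suc a) b (Suc s) j + Pl a b (Suc s) j +
          (case j of 0 \<Rightarrow> 0 | Suc j' \<Rightarrow> Pl a b (Suc s) j' + Pl (a - 1) b (Suc s) j')) =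
          DF (Suc a) j + DF a j + (case j of 0 \<Rightarrow> 0 | Suc j' \<Rightarrow> DF a j' + DF (a - 1) j')"
        unfolding D DF_def using a by simp
      have "IF (b - 1) j + IF b j + (case j of 0 \<Rightarrow> 0 | Suc j' \<Rightarrow> IF b j' + IF (b + 1) j') =
            DF (Suc a) j + DF a j + (case j of 0 \<Rightarrow> 0 | Suc j' \<Rightarrow> DF a j' + DF (a - 1) j')"
        unfolding IF_def DF_def using b by (simp split: nat.split)
      then show ?thesis using L R by simp
    qed
  qed
qed

lemma Tl_first: "Tl a b (Suc s) = (if a = 0 then 0 else Tl (Suc a) b s + 2 * Tl a b s + Tl (a - 1) b s)"
proof (induction s arbitrary: b)
  case 0 show ?case by auto
next
  case (Suc s)
  show ?case
  proof (cases "a = 0")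
    case True then show ?thesis by (simp del: Tl.simps add: Tl_zero_start)
  next
    case a: False
    show ?thesis
    proof (cases "b = 0")
      case True then show ?thesis by simp
    next
      case b: False
      have D: "\<And>x. Tl x b (Suc s) = Tl x (b - 1) s + 2 * Tl x b s + Tl x (b + 1) s" using b by simp
      have I: "\<And>y. Tl a y (Suc s) = Tl (Suc a) y s + 2 * Tl a y s + Tl (a - 1) y s"
        using a Suc.IH by simp
      have top: "Tl a b (Suc (Suc s)) = Tl a (b - 1) (Suc s) + 2 * Tl a b (Suc s) + Tl a (b + 1) (Suc s)"
        by (subst Tl.simps(2)) (simp only: b if_False)
      have L: "Tl a b (Suc (Suc s)) = (Tl (Suc a) (b - 1) s + 2 * Tl a (b - 1) s + Tl (a - 1) (b - 1) s)
          + 2 * (Tl (Suc a) b s + 2 * Tl a b s + Tl (a - 1) b s)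
          + (Tl (Suc a) (b + 1) s + 2 * Tl a (b + 1) s + Tl (a - 1) (b + 1) s)"
        unfolding top I ..
      have R: "(if a = 0 then 0 else Tl (Suc a) b (Suc s) + 2 * Tl a b (Suc s) + Tl (a - 1) b (Suc s))
          = (Tl (Suc a) (b - 1) s + 2 * Tl (Suc a) b s + Tl (Suc a) (b + 1) s)
          + 2 * (Tl a (b - 1) s + 2 * Tl a b s + Tl a (b + 1) s)
          + (Tl (a - 1) (b - 1) s + 2 * Tl (a - 1) b s + Tl (a - 1) (b + 1) s)"
        unfolding D using a by simp
      show ?thesis unfolding L R by simp
    qed
  qed
qed

definition cb :: "nat \<Rightarrow> int \<Rightarrow> int" where
  "cb L x = (if x < 0 then 0 else int (L choose nat x))"

lemma cb_Suc: "cb (Suc L) x = cb L x + cb L (x - 1)"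
proof (cases "x < 0")
  case True then show ?thesis by (simp add: cb_def)
next
  case False
  show ?thesis
  proof (cases "x = 0")
    case True then show ?thesis by (simp add: cb_def)
  next
    case x: False
    then have n: "nat x = Suc (nat (x - 1))" using False by simp
    show ?thesis using False x unfolding cb_def n by simp
  qed
qed

lemma cb_0: "cb 0 x = (if x = 0 then 1 else 0)"
  by (auto simp: cb_def)

definition DD :: "int \<Rightarrow> nat \<Rightarrow> int \<Rightarrow> int" where
  "DD h L m = cb L m * cb L (m + 1 - h) - cb L (m + 1) * cb L (m - h)"

lemma DD_rec: "DD h (Suc L) m = DD (h + 1) L m + DD h L m + DD h L (m - 1) + DD (h - 1) L (m - 1)"
proof -
  have e1: "m + 1 - h - 1 = m - h" "m - h - 1 = m - (h + 1)" "m + 1 - 1 = m"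
    "m - 1 + 1 - h = m - h" "m - 1 - h = m - (h + 1)" "m - 1 + 1 - (h - 1) = m + 1 - h"
    "m - 1 - (h - 1) = m - h" "m + 1 - (h + 1) = m - h" by simp_all
  show ?thesis unfolding DD_def cb_Suc e1 by (simp add: algebra_simps)
qed

lemma DD_zero_h: "DD 0 L m = 0" by (simp add: DD_def)

lemma DD_neg: "h \<ge> 0 \<Longrightarrow> DD h L (-1) = 0" by (simp add: DD_def cb_def)

lemma Pl_closed: "int (Pl h (Suc 0) s j) = DD (int h) s (int j)"
proof (induction s arbitrary: h j)
  case 0
  show ?case by (auto simp: DD_def cb_0)
next
  case (Suc s)
  show ?case
  proof (cases "h = 0")
    case True then show ?thesis by (simp del: Pl.simps add: Pl_zero_start DD_zero_h)
  next
    case h: False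
    have r: "DD (int h) (Suc s) (int j) = DD (int h + 1) s (int j) + DD (int h) s (int j)
        + DD (int h) s (int j - 1) + DD (int h - 1) s (int j - 1)" by (rule DD_rec)
    show ?thesis
    proof (cases j)
      case 0
      have "DD (int h) s (- 1) = 0" "DD (int h - 1) s (- 1) = 0" using h by (simp_all add: DD_neg)
      then show ?thesis using h r 0 Suc.IH unfolding Pl_first[of h] by (simp add: add.commute)
    next
      case (Suc j')
      have e: "int j - 1 = int j'" "int (h - 1) = int h - 1" "int (Suc h) = int h + 1" using Suc h by auto
      show ?thesis using h r Suc.IH[of "Suc h"] Suc.IH[of h] Suc.IH[of h j'] Suc.IH[of "h - 1" j']
        unfolding Pl_first[of h] Suc e by simp
    qed
  qed
qed

definition EE :: "int \<Rightarrow> nat \<Rightarrow> int" where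
  "EE h L = cb (2 * L) (int L + h - 1) - cb (2 * L) (int L + h + 1)"

lemma EE_rec: "EE h (Suc L) = EE (h + 1) L + 2 * EE h L + EE (h - 1) L"
proof -
  have c: "cb (2 * Suc L) x = cb (2 * L) x + 2 * cb (2 * L) (x - 1) + cb (2 * L) (x - 2)" for x
  proof -
    have t: "2 * Suc L = Suc (Suc (2 * L))" by simp
    show ?thesis unfolding t cb_Suc by (simp add: algebra_simps)
  qed
  define y where "y = int L + h"
  have a1: "EE h (Suc L) = cb (2 * Suc L) y - cb (2 * Suc L) (y + 2)"
    unfolding EE_def y_def by (simp add: algebra_simps)
  have a2: "EE (h + 1) L = cb (2 * L) y - cb (2 * L) (y + 2)"
    unfolding EE_def y_def by (simp add: algebra_simps)
  have a3: "EE h L = cb (2 * L) (y - 1) - cb (2 * L) (y + 1)"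
    unfolding EE_def y_def by (simp add: algebra_simps)
  have a4: "EE (h - 1) L = cb (2 * L) (y - 2) - cb (2 * L) y"
    unfolding EE_def y_def by (simp add: algebra_simps)
  have e: "y + 2 - 1 = y + 1" "y + 2 - 2 = y" by simp_all
  show ?thesis unfolding a1 a2 a3 a4 c e by (simp add: algebra_simps)
qed

lemma EE_zero: "EE 0 L = 0"
proof (cases L)
  case 0 then show ?thesis by (simp add: EE_def cb_def)
next
  case (Suc L')
  have "(2 * L choose (L - 1)) = (2 * L choose (2 * L - (L - 1)))"
    by (rule binomial_symmetric) simp
  moreover have "2 * L - (L - 1) = L + 1" using Suc by simp
  ultimately have "(2 * L choose (L - 1)) = (2 * L choose (L + 1))" by simp
  moreover have "nat (int L - 1) = L - 1" "nat (int L + 1) = L + 1" using Suc by auto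
  ultimately show ?thesis unfolding EE_def cb_def using Suc by simp
qed

lemma Tl_closed: "int (Tl h (Suc 0) s) = EE (int h) s"
proof (induction s arbitrary: h)
  case 0
  show ?case by (auto simp: EE_def cb_0)
next
  case (Suc s)
  show ?case
  proof (cases "h = 0")
    case True then show ?thesis by (simp del: Tl.simps add: Tl_zero_start EE_zero)
  next
    case h: False
    have e: "int (h - 1) = int h - 1" "int (Suc h) = int h + 1" using h by auto
    show ?thesis using h EE_rec[of "int h" s] Suc.IH[of "Suc h"] Suc.IH[of h] Suc.IH[of "h - 1"]
      unfolding Tl_first[of h] e by simp
  qed
qed

lemma real_diff_choose: "real ((a - y) * (a choose y)) = (real a - real y) * real (a choose y)"
proof (cases "y \<le> a")
  case True then show ?thesis by (simp add: of_nat_diff)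
next
  case False then show ?thesis by simp
qed

lemma DD_zero_big: "m < k \<Longrightarrow> DD (int k + 1) L (int m) = 0"
  by (simp add: DD_def cb_def)

lemma DD_real:
  assumes "k < n" "k \<le> m"
  shows "real_of_int (DD (int k + 1) (n - k - 1) (int m)) =
     (real k + 1) / (real n - real k) * real ((n - k) choose (m + 1)) * real ((n - k) choose (m - k))"
proof -
  define L where "L = n - k - 1"
  define a where "a = n - k"
  have aL: "a = Suc L" unfolding a_def L_def using assms by simp
  have ra: "real a = real n - real k" unfolding a_def using assms by (simp add: of_nat_diff)
  have apos: "real a > 0" using assms unfolding a_def by simp
  define r4 where "r4 = (if m = k then 0 else real (L choose (m - k - 1)))"
  have c: "real_of_int (DD (int k + 1) L (int m)) =
      real (L choose m) * real (L choose (m - k)) - real (L choose (m + 1)) * r4"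
  proof -
    have e1: "int m + 1 - (int k + 1) = int (m - k)" using assms by simp
    have e2: "nat (int m - (int k + 1)) = m - k - 1" by simp
    have e3: "int m - (int k + 1) < 0 \<longleftrightarrow> m = k" using assms by auto
    show ?thesis unfolding DD_def r4_def cb_def e1 using e3
      by (auto simp: e2 nat_add_distrib simp del: of_nat_diff)
  qed
  have R1: "real a * real (L choose m) = real (m + 1) * real (a choose (m + 1))"
  proof -
    have "Suc L * (L choose m) = (Suc L choose Suc m) * Suc m" by (rule Suc_times_binomial_eq)
    then show ?thesis unfolding aL by (metis of_nat_mult Suc_eq_plus1 mult.commute)
  qed
  have R2: "real a * real (L choose (m - k)) = (real a - real (m - k)) * real (a choose (m - k))"
  proof -
    have "(a - (m - k)) * (a choose (m - k)) = a * ((a - 1) choose (m - k))" by (rule binomial_absorb_comp)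
    then have "real ((a - (m - k)) * (a choose (m - k))) = real (a * (L choose (m - k)))" using aL by simp
    then show ?thesis unfolding real_diff_choose by simp
  qed
  have R3: "real a * real (L choose (m + 1)) = (real a - real (m + 1)) * real (a choose (m + 1))"
  proof -
    have "(a - (m + 1)) * (a choose (m + 1)) = a * ((a - 1) choose (m + 1))" by (rule binomial_absorb_comp)
    then have "real ((a - (m + 1)) * (a choose (m + 1))) = real (a * (L choose (m + 1)))" using aL by simp
    then show ?thesis unfolding real_diff_choose by simp
  qed
  have R4: "real a * r4 = real (m - k) * real (a choose (m - k))"
  proof (cases "m = k")
    case True then show ?thesis unfolding r4_def by simp
  next
    case False
    then have mk: "m - k = Suc (m - k - 1)" using assms by simp
    have "Suc L * (L choose (m - k - 1)) = (Suc L choose Suc (m - k - 1)) * Suc (m - k - 1)"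
      by (rule Suc_times_binomial_eq)
    then have "real a * real (L choose (m - k - 1)) = real (m - k) * real (a choose (m - k))"
      unfolding aL using mk by (metis of_nat_mult mult.commute)
    then show ?thesis unfolding r4_def using False by simp
  qed
  have rmk: "real (m - k) = real m - real k" using assms by (simp add: of_nat_diff)
  define X where "X = real (a choose (m + 1))"
  define Y where "Y = real (a choose (m - k))"
  have "real a * real a * real_of_int (DD (int k + 1) L (int m)) =
      (real a * real (L choose m)) * (real a * real (L choose (m - k)))
      - (real a * real (L choose (m + 1))) * (real a * r4)"
    unfolding c by (simp add: algebra_simps)
  also have "\<dots> = real (m + 1) * X * ((real a - real (m - k)) * Y) - (real a - real (m + 1)) * X * (real (m - k) * Y)"
    unfolding R1 R2 R3 R4 X_def Y_def by simp
  also have "\<dots> = real a * ((real k + 1) * X * Y)"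
    unfolding rmk by (simp add: algebra_simps)
  finally have "real a * (real a * real_of_int (DD (int k + 1) L (int m))) = real a * ((real k + 1) * X * Y)"
    by (simp only: mult.assoc)
  then have "real a * real_of_int (DD (int k + 1) L (int m)) = (real k + 1) * X * Y"
    using apos by (simp only: mult_cancel_left) simp
  then have "real_of_int (DD (int k + 1) L (int m)) = (real k + 1) * X * Y / real a"
    using apos by (simp add: field_simps)
  then show ?thesis unfolding X_def Y_def L_def using ra a_def by simp
qed

lemma EE_zero_big:
  assumes "(n - 1) div 2 < k" "k < n"
  shows "EE (int k + 1) (n - k - 1) = 0"
proof -
  define L where "L = n - k - 1"
  have lt: "2 * L < n - 1" unfolding L_def using assms by linarith
  have e1: "int L + (int k + 1) - 1 = int (n - 1)" unfolding L_def using assms by simp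
  have e2: "int L + (int k + 1) + 1 = int (n + 1)" unfolding L_def using assms by simp
  have z: "(2 * L choose (n - 1)) = 0" "(2 * L choose (n + 1)) = 0" using lt by simp_all
  show ?thesis unfolding EE_def cb_def L_def[symmetric] e1 e2 nat_int by (simp only: z) simp
qed

lemma EE_real:
  assumes "k \<le> (n - 1) div 2" "n \<ge> 1"
  shows "real_of_int (EE (int k + 1) (n - k - 1)) =
     (2 * real k + 2) / (real n + 1) * real ((2 * n - 2 * k - 1) choose n)"
proof -
  define L where "L = n - k - 1"
  define M where "M = 2 * L"
  define a where "a = 2 * n - 2 * k - 1"
  have kn: "2 * k \<le> n - 1" using assms by linarith
  have aM: "a = Suc M" unfolding a_def M_def L_def using kn assms by simp
  have ra: "real a = 2 * real n - 2 * real k - 1" unfolding a_def using kn assms by (simp add: of_nat_diff)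
  have rM: "real M = real a - 1" using aM by simp
  have c: "real_of_int (EE (int k + 1) L) = real (M choose (n - 1)) - real (M choose (n + 1))"
  proof -
    have e1: "int L + (int k + 1) - 1 = int (n - 1)" unfolding L_def using kn assms by simp
    have e2: "int L + (int k + 1) + 1 = int (n + 1)" unfolding L_def using kn assms by simp
    show ?thesis unfolding EE_def cb_def e1 e2 M_def nat_int by simp
  qed
  have J1: "real a * real (M choose (n - 1)) = real n * real (a choose n)"
  proof -
    have "Suc M * (M choose (n - 1)) = (Suc M choose Suc (n - 1)) * Suc (n - 1)" by (rule Suc_times_binomial_eq)
    moreover have "Suc (n - 1) = n" using assms by simp
    ultimately show ?thesis unfolding aM by (metis of_nat_mult mult.commute)
  qed
  have J2: "real (n + 1) * real (M choose (n + 1)) = (real M - real n) * real (M choose n)"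
  proof -
    have "Suc n * (M choose Suc n) = M * ((M - 1) choose n)" by (rule binomial_absorption)
    moreover have "(M - n) * (M choose n) = M * ((M - 1) choose n)" by (rule binomial_absorb_comp)
    ultimately have "real ((M - n) * (M choose n)) = real (Suc n * (M choose Suc n))" by simp
    then show ?thesis unfolding real_diff_choose by (simp add: algebra_simps)
  qed
  have J3: "real a * real (M choose n) = (real a - real n) * real (a choose n)"
  proof -
    have "(a - n) * (a choose n) = a * ((a - 1) choose n)" by (rule binomial_absorb_comp)
    then have "real ((a - n) * (a choose n)) = real (a * (M choose n))" using aM by simp
    then show ?thesis unfolding real_diff_choose by simp
  qed
  define Z where "Z = real (a choose n)"
  have apos: "real a > 0" using aM by simp
  have "real a * (real n + 1) * real_of_int (EE (int k + 1) L) =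
     (real n + 1) * (real a * real (M choose (n - 1))) - real a * (real (n + 1) * real (M choose (n + 1)))"
    unfolding c by (simp add: algebra_simps)
  also have "\<dots> = (real n + 1) * (real n * Z) - (real M - real n) * (real a * real (M choose n))"
    unfolding J1 J2 Z_def by simp
  also have "\<dots> = (real n + 1) * (real n * Z) - (real M - real n) * ((real a - real n) * Z)"
    unfolding J3 Z_def by simp
  also have "\<dots> = real a * ((2 * real k + 2) * Z)"
    unfolding rM ra by (simp add: algebra_simps)
  finally have "real a * ((real n + 1) * real_of_int (EE (int k + 1) L)) = real a * ((2 * real k + 2) * Z)"
    by (simp only: mult.assoc)
  then have "(real n + 1) * real_of_int (EE (int k + 1) L) = (2 * real k + 2) * Z"
    using apos by (simp only: mult_cancel_left) simp
  moreover have "real n + 1 > 0" by simp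
  ultimately have "real_of_int (EE (int k + 1) L) = (2 * real k + 2) * Z / (real n + 1)"
    by (simp add: field_simps)
  then show ?thesis unfolding Z_def L_def a_def by simp
qed

lemma perms_length: "xs \<in> perms n \<Longrightarrow> length xs = n"
proof -
  assume a: "xs \<in> perms n"
  then have "distinct xs" "set xs = {1..n}" unfolding perms_def by auto
  have "card (set xs) = length xs" using \<open>distinct xs\<close> by (rule distinct_card)
  moreover have "card (set xs) = n" using \<open>set xs = {1..n}\<close> by simp
  ultimately show ?thesis by simp
qed

lemma finite_perms: "finite (perms n)"
proof (rule finite_subset)
  show "perms n \<subseteq> {xs. set xs \<subseteq> {1..n} \<and> length xs = n}" using perms_length unfolding perms_def by auto
  show "finite {xs. set xs \<subseteq> {1..n} \<and> length xs = n}" by (rule finite_lists_length_eq) simp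
qed

lemma funpow_set: "set ((stack_sort ^^ t) xs) = set xs"
  by (induction t) (auto simp: ss_set)

lemma funpow_snoc: "\<forall>y\<in>set xs. y < n \<Longrightarrow> (stack_sort ^^ t) (xs @ [n]) = (stack_sort ^^ t) xs @ [n]"
proof (induction t)
  case 0 then show ?case by simp
next
  case (Suc t)
  have "\<forall>y\<in>set ((stack_sort ^^ t) xs). y < n" using Suc.prems funpow_set by blast
  then show ?case using Suc by (simp add: ss_snoc_max)
qed

lemma tss_Suc: "t_stack_sortable (Suc t) xs = t_stack_sortable t (stack_sort xs)"
  unfolding t_stack_sortable_def funpow_Suc_right by (simp add: ss_length)

lemma tss_snoc:
  assumes "\<sigma> \<in> perms (n - 1)" "n \<ge> 1"
  shows "t_stack_sortable t (\<sigma> @ [n]) = t_stack_sortable t \<sigma>"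
proof -
  have l: "length \<sigma> = n - 1" using perms_length[OF assms(1)] .
  have lt: "\<forall>y\<in>set \<sigma>. y < n" using assms unfolding perms_def by auto
  have u: "[1..<length (\<sigma> @ [n]) + 1] = [1..<n] @ [n]" using l assms(2) by simp
  have u2: "[1..<length \<sigma> + 1] = [1..<n]" using l assms(2) by simp
  show ?thesis unfolding t_stack_sortable_def funpow_snoc[OF lt] u u2 by simp
qed

lemma ss_perm_decomp:
  assumes "\<pi> \<in> perms n" "n \<ge> 1"
  shows "\<exists>\<sigma>\<in>perms (n - 1). stack_sort \<pi> = \<sigma> @ [n]"
proof -
  define s0 where "s0 = stack_sort \<pi>"
  have p: "distinct \<pi>" "set \<pi> = {1..n}" using assms unfolding perms_def by auto
  have pne: "\<pi> \<noteq> []" using p assms(2) by auto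
  have s0: "distinct s0" "set s0 = {1..n}" unfolding s0_def using p ss_distinct ss_set by auto
  have "s0 \<noteq> []" "last s0 = Max (set \<pi>)" using ss_last[OF pne] unfolding s0_def by auto
  moreover have "Max {1..n} = n" using assms(2) by (simp add: Max_eq_iff)
  ultimately have ln: "last s0 = n" using p by simp
  define \<sigma> where "\<sigma> = butlast s0"
  have sd: "s0 = \<sigma> @ [n]" unfolding \<sigma>_def using \<open>s0 \<noteq> []\<close> ln by (metis append_butlast_last_id)
  have "distinct \<sigma>" "n \<notin> set \<sigma>" using s0(1) unfolding sd by auto
  moreover have "set \<sigma> = {1..n - 1}"
  proof -
    have "insert n (set \<sigma>) = {1..n}" using s0(2) unfolding sd by simp
    then have "set \<sigma> = {1..n} - {n}" using \<open>n \<notin> set \<sigma>\<close> by auto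
    also have "\<dots> = {1..n - 1}" using assms(2) by auto
    finally show ?thesis .
  qed
  ultimately have "\<sigma> \<in> perms (n - 1)" unfolding perms_def by simp
  then show ?thesis using sd unfolding s0_def by blast
qed

lemma des_snoc_perm:
  assumes "\<sigma> \<in> perms (n - 1)"
  shows "des (\<sigma> @ [n]) = des \<sigma>"
proof -
  have lt: "\<forall>y\<in>set \<sigma>. y < n" using assms unfolding perms_def by auto
  have "\<sigma> \<noteq> [] \<Longrightarrow> \<not> last \<sigma> > n" using lt last_in_set by fastforce
  then show ?thesis by (auto simp add: des_snoc)
qed

lemma B_bound:
  assumes "\<sigma> \<in> perms (n - 1)" "n \<ge> 1"
  shows "card {\<pi> \<in> perms n. stack_sort \<pi> = \<sigma> @ [n] \<and> des \<pi> = m}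
     \<le> Pl (des \<sigma> + 1) 1 (n - des \<sigma> - 1) m"
proof -
  let ?B = "{\<pi> \<in> perms n. stack_sort \<pi> = \<sigma> @ [n] \<and> des \<pi> = m}"
  have "card ?B \<le> card (FS 1 (\<sigma> @ [n]) m)"
  proof (rule card_inj_on_le[of "\<lambda>\<pi>. [\<pi>]"])
    show "inj_on (\<lambda>\<pi>. [\<pi>]) ?B" by (rule inj_onI) simp
    show "(\<lambda>\<pi>. [\<pi>]) ` ?B \<subseteq> FS 1 (\<sigma> @ [n]) m"
    proof
      fix ps assume "ps \<in> (\<lambda>\<pi>. [\<pi>]) ` ?B"
      then obtain \<pi> where pi: "\<pi> \<in> ?B" "ps = [\<pi>]" by blast
      have "distinct \<pi>" "set \<pi> = {1..n}" using pi(1) unfolding perms_def by auto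
      then have "\<pi> \<noteq> []" using assms(2) by auto
      then show "ps \<in> FS 1 (\<sigma> @ [n]) m" using pi \<open>distinct \<pi>\<close> unfolding FS_def FT_def by simp
    qed
    show "finite (FS 1 (\<sigma> @ [n]) m)" by (rule finite_FS)
  qed
  also have "\<dots> \<le> Pl (des (\<sigma> @ [n]) + 1) 1 (length (\<sigma> @ [n]) - des (\<sigma> @ [n]) - 1) m"
    by (rule FS_bound) simp
  also have "\<dots> = Pl (des \<sigma> + 1) 1 (n - des \<sigma> - 1) m"
    using des_snoc_perm[OF assms(1)] perms_length[OF assms(1)] assms(2) by simp
  finally show ?thesis .
qed

lemma C_bound:
  assumes "\<sigma> \<in> perms (n - 1)" "n \<ge> 1"
  shows "card {\<pi> \<in> perms n. stack_sort \<pi> = \<sigma> @ [n]}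
     \<le> Tl (des \<sigma> + 1) 1 (n - des \<sigma> - 1)"
proof -
  let ?B = "{\<pi> \<in> perms n. stack_sort \<pi> = \<sigma> @ [n]}"
  have "card ?B \<le> card (FT 1 (\<sigma> @ [n]))"
  proof (rule card_inj_on_le[of "\<lambda>\<pi>. [\<pi>]"])
    show "inj_on (\<lambda>\<pi>. [\<pi>]) ?B" by (rule inj_onI) simp
    show "(\<lambda>\<pi>. [\<pi>]) ` ?B \<subseteq> FT 1 (\<sigma> @ [n])"
    proof
      fix ps assume "ps \<in> (\<lambda>\<pi>. [\<pi>]) ` ?B"
      then obtain \<pi> where pi: "\<pi> \<in> ?B" "ps = [\<pi>]" by blast
      have "distinct \<pi>" "set \<pi> = {1..n}" using pi(1) unfolding perms_def by auto
      then have "\<pi> \<noteq> []" using assms(2) by auto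
      then show "ps \<in> FT 1 (\<sigma> @ [n])" using pi \<open>distinct \<pi>\<close> unfolding FT_def by simp
    qed
    show "finite (FT 1 (\<sigma> @ [n]))" by (rule finite_FT)
  qed
  also have "\<dots> \<le> Tl (des (\<sigma> @ [n]) + 1) 1 (length (\<sigma> @ [n]) - des (\<sigma> @ [n]) - 1)"
    by (rule FT_bound) simp
  also have "\<dots> = Tl (des \<sigma> + 1) 1 (n - des \<sigma> - 1)"
    using des_snoc_perm[OF assms(1)] perms_length[OF assms(1)] assms(2) by simp
  finally show ?thesis .
qed

lemma group_des:
  fixes f :: "nat \<Rightarrow> real"
  assumes "finite S" "\<forall>x\<in>S. K < des x \<longrightarrow> f (des x) = 0"
  shows "(\<Sum>x\<in>S. f (des x)) = (\<Sum>k=0..K. f k * real (card {x\<in>S. des x = k}))"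
proof -
  let ?T = "{x\<in>S. des x \<le> K}"
  have 1: "(\<Sum>x\<in>S. f (des x)) = (\<Sum>x\<in>?T. f (des x))"
    by (rule sum.mono_neutral_right[OF assms(1)]) (use assms(2) in auto)
  have 2: "(\<Sum>x\<in>?T. f (des x)) = (\<Sum>k\<in>{0..K}. \<Sum>x\<in>{x. x \<in> ?T \<and> des x = k}. f (des x))"
    by (rule sum.group[symmetric]) (use assms(1) in auto)
  have 3: "(\<Sum>x\<in>{x. x \<in> ?T \<and> des x = k}. f (des x)) = f k * real (card {x\<in>S. des x = k})"
    if "k \<in> {0..K}" for k
  proof -
    have "{x. x \<in> ?T \<and> des x = k} = {x\<in>S. des x = k}" using that by auto
    then have "(\<Sum>x\<in>{x. x \<in> ?T \<and> des x = k}. f (des x)) = (\<Sum>x\<in>{x\<in>S. des x = k}. f k)"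
      by (intro sum.cong) auto
    then show ?thesis by simp
  qed
  show ?thesis unfolding 1 2 using 3 by (intro sum.cong) auto
qed

theorem theorem4p1:
  fixes n t m :: nat
  assumes "n \<ge> 2" and "t \<ge> 1"
  shows "(real (W (t + 1) n) \<le>
           (\<Sum>k = 0..(n - 1) div 2.
              (2 * real k + 2) / (real n + 1) * real ((2 * n - 2 * k - 1) choose n)
              * real (Wk t (n - 1) k))) \<and>
         (real (Wk (t + 1) n m) \<le>
           (\<Sum>k = 0..m.
              (real k + 1) / (real n - real k) * real ((n - k) choose (m + 1))
              * real ((n - k) choose (m - k)) * real (Wk t (n - 1) k)))"
proof -
  have n1: "n \<ge> 1" using assms by simp
  define S where "S = {\<sigma> \<in> perms (n - 1). t_stack_sortable t \<sigma>}"
  have finS: "finite S" unfolding S_def using finite_perms by simp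
  have Sp: "\<sigma> \<in> perms (n - 1)" if "\<sigma> \<in> S" for \<sigma> using that unfolding S_def by simp
  have desS: "des \<sigma> < n - 1" if "\<sigma> \<in> S" for \<sigma>
  proof -
    have "length \<sigma> = n - 1" using perms_length[OF Sp[OF that]] .
    moreover have "\<sigma> \<noteq> []" using calculation assms by auto
    ultimately show ?thesis using des_less by metis
  qed
  have cardS: "card {x \<in> S. des x = k} = Wk t (n - 1) k" for k
  proof -
    have "{x \<in> S. des x = k} = {xs \<in> perms (n - 1). t_stack_sortable t xs \<and> des xs = k}"
      unfolding S_def by auto
    then show ?thesis unfolding Wk_def by simp
  qed
  have memS: "\<exists>\<sigma>\<in>S. stack_sort \<pi> = \<sigma> @ [n]"
    if pn: "\<pi> \<in> perms n" and ts: "t_stack_sortable (t + 1) \<pi>" for \<pi>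
  proof -
    obtain \<sigma> where s: "\<sigma> \<in> perms (n - 1)" "stack_sort \<pi> = \<sigma> @ [n]"
      using ss_perm_decomp[OF pn n1] by blast
    have "t_stack_sortable t (stack_sort \<pi>)" using ts tss_Suc by simp
    then have "t_stack_sortable t \<sigma>" using tss_snoc[OF s(1) n1] s(2) by simp
    then show ?thesis using s unfolding S_def by blast
  qed
  define B where "B \<sigma> = {\<pi> \<in> perms n. stack_sort \<pi> = \<sigma> @ [n] \<and> des \<pi> = m}" for \<sigma>
  define f2 where "f2 k = (if k \<le> m then (real k + 1) / (real n - real k) * real ((n - k) choose (m + 1))
              * real ((n - k) choose (m - k)) else 0)" for k
  have finB: "finite (B \<sigma>)" for \<sigma> unfolding B_def using finite_perms by simp
  have A2: "{xs \<in> perms n. t_stack_sortable (t + 1) xs \<and> des xs = m} \<subseteq> (\<Union>\<sigma>\<in>S. B \<sigma>)"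
    unfolding B_def using memS by blast
  have c2: "card {xs \<in> perms n. t_stack_sortable (t + 1) xs \<and> des xs = m} \<le> (\<Sum>\<sigma>\<in>S. card (B \<sigma>))"
  proof -
    have "card {xs \<in> perms n. t_stack_sortable (t + 1) xs \<and> des xs = m} \<le> card (\<Union>\<sigma>\<in>S. B \<sigma>)"
      by (rule card_mono[OF _ A2]) (use finS finB in auto)
    also have "\<dots> \<le> (\<Sum>\<sigma>\<in>S. card (B \<sigma>))" by (rule card_UN_le[OF finS])
    finally show ?thesis .
  qed
  have b2: "real (card (B \<sigma>)) \<le> f2 (des \<sigma>)" if "\<sigma> \<in> S" for \<sigma>
  proof -
    define k where "k = des \<sigma>"
    have kn: "k < n" using desS[OF that] unfolding k_def by simp
    have "card (B \<sigma>) \<le> Pl (k + 1) (Suc 0) (n - k - 1) m"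
      using B_bound[OF Sp[OF that] n1, of m] unfolding B_def k_def by simp
    then have "real (card (B \<sigma>)) \<le> real_of_int (int (Pl (k + 1) (Suc 0) (n - k - 1) m))" by simp
    also have "\<dots> = real_of_int (DD (int k + 1) (n - k - 1) (int m))"
      unfolding Pl_closed by (simp add: add.commute)
    also have "\<dots> = f2 k"
    proof (cases "k \<le> m")
      case True then show ?thesis unfolding f2_def using DD_real[OF kn True] by simp
    next
      case False then show ?thesis unfolding f2_def using DD_zero_big[of m k] by simp
    qed
    finally show ?thesis unfolding k_def .
  qed
  have part2: "real (Wk (t + 1) n m) \<le>
           (\<Sum>k = 0..m.
              (real k + 1) / (real n - real k) * real ((n - k) choose (m + 1))
              * real ((n - k) choose (m - k)) * real (Wk t (n - 1) k))"
  proof -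
    have "real (Wk (t + 1) n m) \<le> (\<Sum>\<sigma>\<in>S. real (card (B \<sigma>)))"
      using c2 unfolding Wk_def by (simp add: of_nat_sum[symmetric] del: of_nat_sum)
    also have "\<dots> \<le> (\<Sum>\<sigma>\<in>S. f2 (des \<sigma>))" by (rule sum_mono) (rule b2)
    also have "\<dots> = (\<Sum>k=0..m. f2 k * real (card {x\<in>S. des x = k}))"
      by (rule group_des[OF finS]) (simp add: f2_def)
    also have "\<dots> = (\<Sum>k = 0..m.
              (real k + 1) / (real n - real k) * real ((n - k) choose (m + 1))
              * real ((n - k) choose (m - k)) * real (Wk t (n - 1) k))"
      by (intro sum.cong) (auto simp: f2_def cardS)
    finally show ?thesis .
  qed
  define C where "C \<sigma> = {\<pi> \<in> perms n. stack_sort \<pi> = \<sigma> @ [n]}" for \<sigma>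
  define f1 where "f1 k = (if k \<le> (n - 1) div 2 then
       (2 * real k + 2) / (real n + 1) * real ((2 * n - 2 * k - 1) choose n) else 0)" for k
  have finC: "finite (C \<sigma>)" for \<sigma> unfolding C_def using finite_perms by simp
  have A1: "{xs \<in> perms n. t_stack_sortable (t + 1) xs} \<subseteq> (\<Union>\<sigma>\<in>S. C \<sigma>)"
    unfolding C_def using memS by blast
  have c1: "card {xs \<in> perms n. t_stack_sortable (t + 1) xs} \<le> (\<Sum>\<sigma>\<in>S. card (C \<sigma>))"
  proof -
    have "card {xs \<in> perms n. t_stack_sortable (t + 1) xs} \<le> card (\<Union>\<sigma>\<in>S. C \<sigma>)"
      by (rule card_mono[OF _ A1]) (use finS finC in auto)
    also have "\<dots> \<le> (\<Sum>\<sigma>\<in>S. card (C \<sigma>))" by (rule card_UN_le[OF finS])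
    finally show ?thesis .
  qed
  have b1: "real (card (C \<sigma>)) \<le> f1 (des \<sigma>)" if "\<sigma> \<in> S" for \<sigma>
  proof -
    define k where "k = des \<sigma>"
    have kn: "k < n" using desS[OF that] unfolding k_def by simp
    have "card (C \<sigma>) \<le> Tl (k + 1) (Suc 0) (n - k - 1)"
      using C_bound[OF Sp[OF that] n1] unfolding C_def k_def by simp
    then have "real (card (C \<sigma>)) \<le> real_of_int (int (Tl (k + 1) (Suc 0) (n - k - 1)))" by simp
    also have "\<dots> = real_of_int (EE (int k + 1) (n - k - 1))"
      unfolding Tl_closed by (simp add: add.commute)
    also have "\<dots> = f1 k"
    proof (cases "k \<le> (n - 1) div 2")
      case True then show ?thesis unfolding f1_def using EE_real[OF True n1] by simp
    next
      case False then show ?thesis unfolding f1_def using EE_zero_big[of n k] kn by simp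
    qed
    finally show ?thesis unfolding k_def .
  qed
  have part1: "real (W (t + 1) n) \<le>
           (\<Sum>k = 0..(n - 1) div 2.
              (2 * real k + 2) / (real n + 1) * real ((2 * n - 2 * k - 1) choose n)
              * real (Wk t (n - 1) k))"
  proof -
    have "real (W (t + 1) n) \<le> (\<Sum>\<sigma>\<in>S. real (card (C \<sigma>)))"
      using c1 unfolding W_def by (simp add: of_nat_sum[symmetric] del: of_nat_sum)
    also have "\<dots> \<le> (\<Sum>\<sigma>\<in>S. f1 (des \<sigma>))" by (rule sum_mono) (rule b1)
    also have "\<dots> = (\<Sum>k=0..(n - 1) div 2. f1 k * real (card {x\<in>S. des x = k}))"
      by (rule group_des[OF finS]) (simp add: f1_def)
    also have "\<dots> = (\<Sum>k = 0..(n - 1) div 2.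
              (2 * real k + 2) / (real n + 1) * real ((2 * n - 2 * k - 1) choose n)
              * real (Wk t (n - 1) k))"
      by (intro sum.cong) (auto simp: f1_def cardS)
    finally show ?thesis .
  qed
  show ?thesis using part1 part2 by simp
qed

end
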